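(* Let $F$ be a hyperfield and let $p$ be a polynomial over $F$ of degree $2$ or $3$. Then $p$ is irreducible if and only if $p$ has no root in $F$.
   Context: A hyperfield is a set $F$ with a commutative multiplication and a multivalued addition $\boxplus:F\times F\to\mathcal P(F)$ such that: there are unique $0,1\in F$ with $(F,\cdot,1)$ a commutative monoid and $F\setminus\{0\}$ a group; $ab\boxplus ac=\{ad: d\in b\boxplus c\}$; and $(F,\boxplus,0)$ is a commutative hypergroup (with additive inverses $-a$, $0\in a\boxplus(-a)$). Iterated sums: $\boxplus_{i=1}^n a_i=\bigcup_{b\in\boxplus_{i=1}^{n-1}a_i} b\boxplus a_n$. A polynomial over $F$ is a finitely supported sequence $(c_i)$ in $F$, written $\sum c_iT^i$, with degree the largest $k$ with $c_k\ne0$. Hyperproduct: $p\boxdot q=\{\sum e_iT^i : e_i\in \boxplus_{k+l=i} c_kd_l\}$. $p\sim q$ means $p\in a\boxdot q$ for some nonzero $a\in F$; $p$ is irreducible if $\deg p\ge1$ and $p\in q_1\boxdot q_2$ implies $p\sim q_1$ or $p\sim q_2$. An element $a\in F$ is a root of $p=\sum c_iT^i$ if $0\in\boxplus_i c_ia^i$. (Known fact used freely: $a$ is a root of $p$ iff $p\in(T-a)\boxdot q$ for some polynomial $q$.) *)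

theory Defs
  imports Main
begin

(* A hyperfield is given on the ambient type 'a (carrier = UNIV) by
   a multiplication mul, a multivalued addition add, and constants zero, one. *)

definition hadd_set :: "('a \<Rightarrow> 'a \<Rightarrow> 'a set) \<Rightarrow> 'a set \<Rightarrow> 'a \<Rightarrow> 'a set" where
  "hadd_set add S x = (\<Union>b\<in>S. add b x)"

definition hyperfield :: "('a \<Rightarrow> 'a \<Rightarrow> 'a) \<Rightarrow> ('a \<Rightarrow> 'a \<Rightarrow> 'a set) \<Rightarrow> 'a \<Rightarrow> 'a \<Rightarrow> bool" where
  "hyperfield mul add zero one \<longleftrightarrow>
     \<comment> \<open>(F, mul, one) commutative monoid\<close>
     (\<forall>a b. mul a b = mul b a) \<and>
     (\<forall>a b c. mul (mul a b) c = mul a (mul b c)) \<and>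
     (\<forall>a. mul one a = a) \<and>
     \<comment> \<open>F minus {0} is a group under mul\<close>
     zero \<noteq> one \<and>
     (\<forall>a b. a \<noteq> zero \<longrightarrow> b \<noteq> zero \<longrightarrow> mul a b \<noteq> zero) \<and>
     (\<forall>a. a \<noteq> zero \<longrightarrow> (\<exists>b. b \<noteq> zero \<and> mul a b = one)) \<and>
     \<comment> \<open>distributivity\<close>
     (\<forall>a b c. add (mul a b) (mul a c) = (\<lambda>d. mul a d) ` add b c) \<and>
     \<comment> \<open>(F, add, zero) commutative hypergroup\<close>
     (\<forall>a b. add a b \<noteq> {}) \<and>
     (\<forall>a b. add a b = add b a) \<and>
     (\<forall>a b c. hadd_set add (add a b) c = (\<Union>x\<in>add b c. add a x)) \<and>
     (\<forall>a. add zero a = {a}) \<and>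
     (\<forall>a. \<exists>!b. zero \<in> add a b) \<and>
     (\<forall>a b c. c \<in> add a b \<longrightarrow> (\<forall>nb. zero \<in> add b nb \<longrightarrow> a \<in> add c nb))"

fun hsum :: "('a \<Rightarrow> 'a \<Rightarrow> 'a set) \<Rightarrow> 'a \<Rightarrow> 'a list \<Rightarrow> 'a set" where
  "hsum add zero [] = {zero}"
| "hsum add zero (x # xs) = foldl (hadd_set add) {x} xs"

definition is_poly :: "'a \<Rightarrow> (nat \<Rightarrow> 'a) \<Rightarrow> bool" where
  "is_poly zero c \<longleftrightarrow> finite {i. c i \<noteq> zero}"

definition has_degree :: "'a \<Rightarrow> (nat \<Rightarrow> 'a) \<Rightarrow> nat \<Rightarrow> bool" where
  "has_degree zero c k \<longleftrightarrow> c k \<noteq> zero \<and> (\<forall>i>k. c i = zero)"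

definition hpmult :: "('a \<Rightarrow> 'a \<Rightarrow> 'a) \<Rightarrow> ('a \<Rightarrow> 'a \<Rightarrow> 'a set) \<Rightarrow> 'a
     \<Rightarrow> (nat \<Rightarrow> 'a) \<Rightarrow> (nat \<Rightarrow> 'a) \<Rightarrow> (nat \<Rightarrow> 'a) set" where
  "hpmult mul add zero c d =
     {e. is_poly zero e \<and>
         (\<forall>i. e i \<in> hsum add zero (map (\<lambda>k. mul (c k) (d (i - k))) [0..<Suc i]))}"

definition const_poly :: "'a \<Rightarrow> 'a \<Rightarrow> nat \<Rightarrow> 'a" where
  "const_poly zero a = (\<lambda>i. if i = 0 then a else zero)"

definition assoc_poly :: "('a \<Rightarrow> 'a \<Rightarrow> 'a) \<Rightarrow> ('a \<Rightarrow> 'a \<Rightarrow> 'a set) \<Rightarrow> 'a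
     \<Rightarrow> (nat \<Rightarrow> 'a) \<Rightarrow> (nat \<Rightarrow> 'a) \<Rightarrow> bool" where
  "assoc_poly mul add zero p q \<longleftrightarrow>
     (\<exists>a. a \<noteq> zero \<and> p \<in> hpmult mul add zero (const_poly zero a) q)"

definition hirreducible :: "('a \<Rightarrow> 'a \<Rightarrow> 'a) \<Rightarrow> ('a \<Rightarrow> 'a \<Rightarrow> 'a set) \<Rightarrow> 'a
     \<Rightarrow> (nat \<Rightarrow> 'a) \<Rightarrow> bool" where
  "hirreducible mul add zero p \<longleftrightarrow>
     (\<exists>k\<ge>1. has_degree zero p k) \<and>
     (\<forall>q1 q2. is_poly zero q1 \<longrightarrow> is_poly zero q2 \<longrightarrow> p \<in> hpmult mul add zero q1 q2 \<longrightarrow>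
        assoc_poly mul add zero p q1 \<or> assoc_poly mul add zero p q2)"

definition hpow :: "('a \<Rightarrow> 'a \<Rightarrow> 'a) \<Rightarrow> 'a \<Rightarrow> 'a \<Rightarrow> nat \<Rightarrow> 'a" where
  "hpow mul one a n = ((mul a) ^^ n) one"

definition is_root :: "('a \<Rightarrow> 'a \<Rightarrow> 'a) \<Rightarrow> ('a \<Rightarrow> 'a \<Rightarrow> 'a set) \<Rightarrow> 'a \<Rightarrow> 'a
     \<Rightarrow> (nat \<Rightarrow> 'a) \<Rightarrow> 'a \<Rightarrow> bool" where
  "is_root mul add zero one p a \<longleftrightarrow>
     (\<exists>n. has_degree zero p n \<and>
        zero \<in> hsum add zero (map (\<lambda>i. mul (p i) (hpow mul one a i)) [0..<Suc n]))"

end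

theory Submission imports Defs begin


locale HF =
  fixes mul :: "'a \<Rightarrow> 'a \<Rightarrow> 'a" and add :: "'a \<Rightarrow> 'a \<Rightarrow> 'a set" and zero one :: 'a
  assumes hf: "hyperfield mul add zero one"
begin

lemma hfD: "(\<forall>a b. mul a b = mul b a) \<and> (\<forall>a b c. mul (mul a b) c = mul a (mul b c)) \<and> (\<forall>a. mul one a = a) \<and> zero \<noteq> one \<and> (\<forall>a b. a \<noteq> zero \<longrightarrow> b \<noteq> zero \<longrightarrow> mul a b \<noteq> zero) \<and> (\<forall>a. a \<noteq> zero \<longrightarrow> (\<exists>b. b \<noteq> zero \<and> mul a b = one)) \<and> (\<forall>a b c. add (mul a b) (mul a c) = (\<lambda>d. mul a d) ` add b c) \<and> (\<forall>a b. add a b \<noteq> {}) \<and> (\<forall>a b. add a b = add b a) \<and> (\<forall>a b c. hadd_set add (add a b) c = (\<Union>x\<in>add b c. add a x)) \<and> (\<forall>a. add zero a = {a}) \<and> (\<forall>a. \<exists>!b. zero \<in> add a b) \<and> (\<forall>a b c. c \<in> add a b \<longrightarrow> (\<forall>nb. zero \<in> add b nb \<longrightarrow> a \<in> add c nb))"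
  using hf unfolding hyperfield_def .

lemma mul_comm: "mul a b = mul b a" using hfD[THEN conjunct1] by blast
lemma mul_assoc: "mul (mul a b) c = mul a (mul b c)" using hfD[THEN conjunct2, THEN conjunct1] by blast
lemma mul_one[simp]: "mul one a = a" using hfD[THEN conjunct2, THEN conjunct2, THEN conjunct1] by blast
lemma mul_one_r[simp]: "mul a one = a" using mul_comm mul_one by metis
lemma zero_ne_one[simp]: "zero \<noteq> one" using hfD[THEN conjunct2, THEN conjunct2, THEN conjunct2, THEN conjunct1] by blast
lemma mul_nz: "a \<noteq> zero \<Longrightarrow> b \<noteq> zero \<Longrightarrow> mul a b \<noteq> zero" using hfD[THEN conjunct2, THEN conjunct2, THEN conjunct2, THEN conjunct2, THEN conjunct1] by blast
lemma inv_ex: "a \<noteq> zero \<Longrightarrow> \<exists>b. b \<noteq> zero \<and> mul a b = one" using hfD[THEN conjunct2, THEN conjunct2, THEN conjunct2, THEN conjunct2, THEN conjunct2, THEN conjunct1] by blast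
lemma distrib: "add (mul a b) (mul a c) = (\<lambda>d. mul a d) ` add b c" using hfD[THEN conjunct2, THEN conjunct2, THEN conjunct2, THEN conjunct2, THEN conjunct2, THEN conjunct2, THEN conjunct1] by blast
lemma add_comm: "add a b = add b a" using hfD[THEN conjunct2, THEN conjunct2, THEN conjunct2, THEN conjunct2, THEN conjunct2, THEN conjunct2, THEN conjunct2, THEN conjunct2, THEN conjunct1] by blast
lemma add_assoc0: "hadd_set add (add a b) c = (\<Union>x\<in>add b c. add a x)" using hfD[THEN conjunct2, THEN conjunct2, THEN conjunct2, THEN conjunct2, THEN conjunct2, THEN conjunct2, THEN conjunct2, THEN conjunct2, THEN conjunct2, THEN conjunct1] by blast
lemma add_zero[simp]: "add zero a = {a}" using hfD[THEN conjunct2, THEN conjunct2, THEN conjunct2, THEN conjunct2, THEN conjunct2, THEN conjunct2, THEN conjunct2, THEN conjunct2, THEN conjunct2, THEN conjunct2, THEN conjunct1] by blast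
lemma add_zero_r[simp]: "add a zero = {a}" using add_comm add_zero by metis
lemma neg_ex1: "\<exists>!b. zero \<in> add a b" using hfD[THEN conjunct2, THEN conjunct2, THEN conjunct2, THEN conjunct2, THEN conjunct2, THEN conjunct2, THEN conjunct2, THEN conjunct2, THEN conjunct2, THEN conjunct2, THEN conjunct2, THEN conjunct1] by blast
lemma revers: "c \<in> add a b \<Longrightarrow> zero \<in> add b nb \<Longrightarrow> a \<in> add c nb" using hfD[THEN conjunct2, THEN conjunct2, THEN conjunct2, THEN conjunct2, THEN conjunct2, THEN conjunct2, THEN conjunct2, THEN conjunct2, THEN conjunct2, THEN conjunct2, THEN conjunct2, THEN conjunct2] by blast

interpretation M: abel_semigroup mul
  by unfold_locales (rule mul_assoc, rule mul_comm)

lemmas mul_ac = M.assoc M.commute M.left_commute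

lemma mul_zero_nz: "a \<noteq> zero \<Longrightarrow> mul a zero = zero"
proof (rule ccontr)
  assume a: "a \<noteq> zero" and h: "mul a zero \<noteq> zero"
  obtain b where b: "b \<noteq> zero" "mul a b = one" using inv_ex a by blast
  have "mul b (mul a zero) \<noteq> zero" using mul_nz b h by blast
  moreover have "mul b (mul a zero) = zero" using b by (metis mul_assoc mul_comm mul_one)
  ultimately show False by blast
qed

lemma mul_zero[simp]: "mul a zero = zero"
proof (cases "a = zero")
  case False then show ?thesis by (rule mul_zero_nz)
next
  case True
  obtain n where n: "zero \<in> add one n" using neg_ex1 by blast
  have nz: "n \<noteq> zero" using n by auto
  have "add (mul zero one) (mul zero n) = (\<lambda>d. mul zero d) ` add one n" by (rule distrib)
  moreover have "mul zero n = zero" using nz mul_zero_nz mul_comm by metis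
  ultimately have "{zero} = (\<lambda>d. mul zero d) ` add one n" by simp
  then have "mul zero zero \<in> {zero}" using n by blast
  then show ?thesis using True by simp
qed

lemma mul_zero_l[simp]: "mul zero a = zero" using mul_comm mul_zero by metis

definition hneg where "hneg a = (THE b. zero \<in> add a b)"
lemma neg_in: "zero \<in> add a (hneg a)" unfolding hneg_def using neg_ex1 by (rule theI')
lemma neg_unique: "zero \<in> add a b \<Longrightarrow> b = hneg a" unfolding hneg_def using neg_ex1 by (metis the1_equality)
lemma revers': "c \<in> add a b \<Longrightarrow> a \<in> add c (hneg b)" using revers neg_in by blast
lemma neg_neg[simp]: "hneg (hneg a) = a" using neg_in neg_unique add_comm by metis
lemma neg_zero[simp]: "hneg zero = zero" using neg_unique by simp
lemma neg_mul: "hneg (mul c x) = mul c (hneg x)"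
proof -
  have "add (mul c x) (mul c (hneg x)) = (\<lambda>d. mul c d) ` add x (hneg x)" by (rule distrib)
  then have "zero \<in> add (mul c x) (mul c (hneg x))" using neg_in[of x] by (metis image_eqI mul_zero)
  then show ?thesis using neg_unique by metis
qed
lemma neg_mul_l: "mul (hneg x) c = hneg (mul x c)" using neg_mul mul_comm by metis

definition hinv where "hinv a = (SOME b. b \<noteq> zero \<and> mul a b = one)"
lemma hinv: "a \<noteq> zero \<Longrightarrow> hinv a \<noteq> zero \<and> mul a (hinv a) = one"
  unfolding hinv_def using inv_ex by (rule someI_ex)

definition sadd where "sadd A B = (\<Union>a\<in>A. \<Union>b\<in>B. add a b)"

lemma sadd_assoc: "sadd (sadd A B) C = sadd A (sadd B C)"
proof -
  have ax: "\<And>a b c z. (\<exists>y\<in>add a b. z \<in> add y c) \<longleftrightarrow> (\<exists>x\<in>add b c. z \<in> add a x)"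
    using add_assoc0 unfolding hadd_set_def by (metis UN_iff)
  show ?thesis
  proof (rule set_eqI, rule iffI)
    fix x assume "x \<in> sadd (sadd A B) C"
    then obtain a b c y where h: "a\<in>A" "b\<in>B" "c\<in>C" "y\<in>add a b" "x\<in>add y c"
      unfolding sadd_def by blast
    then obtain w where w: "w\<in>add b c" "x \<in> add a w" using ax by blast
    show "x \<in> sadd A (sadd B C)" unfolding sadd_def using h w by blast
  next
    fix x assume "x \<in> sadd A (sadd B C)"
    then obtain a b c w where h: "a\<in>A" "b\<in>B" "c\<in>C" "w\<in>add b c" "x\<in>add a w"
      unfolding sadd_def by blast
    then obtain y where w: "y\<in>add a b" "x \<in> add y c" using ax by blast
    show "x \<in> sadd (sadd A B) C" unfolding sadd_def using h w by blast
  qed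
qed
lemma sadd_comm: "sadd A B = sadd B A" unfolding sadd_def using add_comm by blast
lemma sadd_zero[simp]: "sadd {zero} B = B" unfolding sadd_def by auto
lemma sadd_zero_r[simp]: "sadd B {zero} = B" unfolding sadd_def by auto
lemma sadd_single[simp]: "sadd {a} {b} = add a b" unfolding sadd_def by auto

lemma foldl_sadd: "foldl (hadd_set add) S xs = sadd S (hsum add zero xs)"
proof (induction xs arbitrary: S)
  case Nil then show ?case by simp
next
  case (Cons y ys)
  have h: "hadd_set add S y = sadd S {y}" unfolding hadd_set_def sadd_def by auto
  have "foldl (hadd_set add) S (y # ys) = sadd (sadd S {y}) (hsum add zero ys)" using Cons h by simp
  moreover have "hsum add zero (y # ys) = sadd {y} (hsum add zero ys)"
    using Cons[of "{y}"] by simp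
  ultimately show ?case by (simp add: sadd_assoc)
qed

lemma hsum_Cons: "hsum add zero (x # xs) = sadd {x} (hsum add zero xs)"
  using foldl_sadd by simp
lemma hsum_append: "hsum add zero (xs @ ys) = sadd (hsum add zero xs) (hsum add zero ys)"
  by (induction xs) (auto simp: hsum_Cons sadd_assoc simp del: hsum.simps(2))
lemma hsum_one[simp]: "hsum add zero [x] = {x}" by simp
lemma hsum_two: "hsum add zero [x, y] = add x y" by (simp add: hsum_Cons del: hsum.simps(2))
lemma hsum_zeros: "set xs \<subseteq> {zero} \<Longrightarrow> hsum add zero xs = {zero}"
  by (induction xs) (auto simp: hsum_Cons simp del: hsum.simps(2))
lemma hsum_rev: "hsum add zero (rev xs) = hsum add zero xs"
  by (induction xs) (auto simp: hsum_Cons hsum_append sadd_comm simp del: hsum.simps(2))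
lemma hsum_take: assumes "\<forall>j. n \<le> j \<and> j < length xs \<longrightarrow> xs ! j = zero"
  shows "hsum add zero xs = hsum add zero (take n xs)"
proof -
  have "set (drop n xs) \<subseteq> {zero}" using assms
    by (auto simp: in_set_conv_nth)
  then have "hsum add zero (drop n xs) = {zero}" by (rule hsum_zeros)
  then show ?thesis using hsum_append[of "take n xs" "drop n xs"] by simp
qed
lemma hsum_single: assumes "k < length xs" "\<forall>j<length xs. j \<noteq> k \<longrightarrow> xs ! j = zero"
  shows "hsum add zero xs = {xs ! k}"
proof -
  have e: "xs = take k xs @ xs ! k # drop (Suc k) xs" using assms(1) by (simp add: id_take_nth_drop)
  have "set (take k xs) \<subseteq> {zero}" using assms by (auto simp: in_set_conv_nth)
  moreover have "set (drop (Suc k) xs) \<subseteq> {zero}" using assms by (auto simp: in_set_conv_nth)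
  ultimately show ?thesis
    by (subst e) (simp add: hsum_append hsum_Cons hsum_zeros del: hsum.simps(2))
qed

end


context HF begin


definition coef where "coef c d i = hsum add zero (map (\<lambda>k. mul (c k) (d (i - k))) [0..<Suc i])"

lemma hpmult_iff: "e \<in> hpmult mul add zero c d \<longleftrightarrow> is_poly zero e \<and> (\<forall>i. e i \<in> coef c d i)"
  unfolding hpmult_def coef_def by simp

lemma coef_comm: "coef c d i = coef d c i"
proof -
  have "map (\<lambda>k. mul (c k) (d (i - k))) [0..<Suc i] = rev (map (\<lambda>k. mul (d k) (c (i - k))) [0..<Suc i])"
    by (rule nth_equalityI) (auto simp: rev_nth mul_comm simp del: upt_Suc)
  then show ?thesis unfolding coef_def by (metis hsum_rev)
qed

lemma hpmult_comm: "p \<in> hpmult mul add zero c d \<Longrightarrow> p \<in> hpmult mul add zero d c"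
  by (simp add: hpmult_iff coef_comm)

lemma coef_const: "coef (const_poly zero a) q i = {mul a (q i)}"
proof -
  have "coef (const_poly zero a) q i = hsum add zero (take 1 (map (\<lambda>k. mul (const_poly zero a k) (q (i - k))) [0..<Suc i]))"
    unfolding coef_def by (rule hsum_take) (auto simp: const_poly_def simp del: upt_Suc)
  also have "\<dots> = {mul a (q i)}" by (simp add: const_poly_def upt_conv_Cons del: upt_Suc)
  finally show ?thesis .
qed

lemma coef_lin0: "coef c q 0 = {mul (c 0) (q 0)}" unfolding coef_def by simp

lemma coef_linS: assumes "\<forall>k\<ge>2. c k = zero"
  shows "coef c q (Suc i) = add (mul (c 0) (q (Suc i))) (mul (c 1) (q i))"
proof -
  have "coef c q (Suc i) = hsum add zero (take 2 (map (\<lambda>k. mul (c k) (q (Suc i - k))) [0..<Suc (Suc i)]))"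
    unfolding coef_def by (rule hsum_take) (use assms in \<open>auto simp del: upt_Suc\<close>)
  also have "take 2 (map (\<lambda>k. mul (c k) (q (Suc i - k))) [0..<Suc (Suc i)]) = [mul (c 0) (q (Suc i)), mul (c 1) (q i)]"
    by (simp add: upt_conv_Cons del: upt_Suc)
  finally show ?thesis by (simp add: hsum_two del: hsum.simps(2))
qed

lemma degree_unique: "has_degree zero c k \<Longrightarrow> has_degree zero c k' \<Longrightarrow> k = k'"
  unfolding has_degree_def by (metis linorder_neqE_nat)

lemma degree_ex: assumes "is_poly zero c" "c j \<noteq> zero" shows "\<exists>k. has_degree zero c k \<and> j \<le> k"
proof -
  let ?S = "{i. c i \<noteq> zero}"
  have f: "finite ?S" using assms(1) unfolding is_poly_def .
  have "j \<in> ?S" using assms(2) by simp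
  then have "?S \<noteq> {}" by blast
  then have "Max ?S \<in> ?S" by (rule Max_in[OF f])
  moreover have "j \<le> Max ?S" by (rule Max_ge[OF f]) fact
  moreover have "\<forall>i>Max ?S. c i = zero" using f Max_ge not_le by blast
  ultimately show ?thesis unfolding has_degree_def by blast
qed

lemma degree_mult: assumes "has_degree zero c m" "has_degree zero d n" "e \<in> hpmult mul add zero c d"
  shows "has_degree zero e (m + n)"
proof -
  have cm: "\<And>k. k > m \<Longrightarrow> c k = zero" and dn: "\<And>k. k > n \<Longrightarrow> d k = zero"
    and nz: "c m \<noteq> zero" "d n \<noteq> zero" using assms(1,2) unfolding has_degree_def by auto
  have z: "mul (c j) (d (m + n - j)) = zero" if "j \<noteq> m" "j < Suc (m + n)" for j
  proof (cases "j > m")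
    case True then show ?thesis using cm by simp
  next
    case False then have "m + n - j > n" using that by simp
    then show ?thesis using dn by simp
  qed
  have "coef c d (m + n) = {mul (c m) (d (m + n - m))}"
    unfolding coef_def
    by (subst hsum_single[where k = m]) (use z in \<open>auto simp del: upt_Suc\<close>)
  then have "e (m + n) = mul (c m) (d n)" using assms(3) by (auto simp: hpmult_iff)
  then have "e (m + n) \<noteq> zero" using nz mul_nz by simp
  moreover have "\<forall>i>m + n. e i = zero"
  proof (intro allI impI)
    fix i assume i: "i > m + n"
    have z: "mul (c k) (d (i - k)) = zero" if "k < Suc i" for k
    proof (cases "k > m")
      case True then show ?thesis using cm by simp
    next
      case False then have "i - k > n" using i by simp
      then show ?thesis using dn by simp
    qed
    have "coef c d i = {zero}" unfolding coef_def
      by (rule hsum_zeros) (use z in \<open>auto simp del: upt_Suc\<close>)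
    then show "e i = zero" using assms(3) by (auto simp: hpmult_iff)
  qed
  ultimately show ?thesis unfolding has_degree_def by simp
qed

lemma zero_mult: assumes "\<forall>i. d i = zero" "e \<in> hpmult mul add zero c d" shows "e i = zero"
proof -
  have "coef c d i = {zero}" unfolding coef_def by (rule hsum_zeros) (use assms(1) in auto)
  then show ?thesis using assms(2) by (auto simp: hpmult_iff)
qed

lemma nonzero_degree: assumes "is_poly zero q1" "is_poly zero q2" "p \<in> hpmult mul add zero q1 q2" "has_degree zero p n"
  shows "\<exists>m1 m2. has_degree zero q1 m1 \<and> has_degree zero q2 m2 \<and> m1 + m2 = n"
proof -
  have pn: "p n \<noteq> zero" using assms(4) unfolding has_degree_def by simp
  have "\<exists>j. q2 j \<noteq> zero" using zero_mult[OF _ assms(3)] pn by blast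
  then obtain m2 where m2: "has_degree zero q2 m2" using degree_ex assms(2) by blast
  have "\<exists>j. q1 j \<noteq> zero" using zero_mult[OF _ hpmult_comm[OF assms(3)]] pn by blast
  then obtain m1 where m1: "has_degree zero q1 m1" using degree_ex assms(1) by blast
  have "has_degree zero p (m1 + m2)" using degree_mult m1 m2 assms(3) by blast
  then show ?thesis using m1 m2 degree_unique assms(4) by blast
qed

lemma assoc_degree: assumes "assoc_poly mul add zero p q" "has_degree zero q k" shows "has_degree zero p k"
proof -
  obtain a where a: "a \<noteq> zero" "p \<in> hpmult mul add zero (const_poly zero a) q"
    using assms(1) unfolding assoc_poly_def by blast
  then have "\<And>i. p i = mul a (q i)" by (auto simp: hpmult_iff coef_const)
  then show ?thesis using assms(2) a(1) mul_nz unfolding has_degree_def by (metis mul_zero)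
qed

end


context HF begin

lemma one_ne_zero[simp]: "one \<noteq> zero" using zero_ne_one by metis
lemma hpow_0[simp]: "hpow mul one a 0 = one" unfolding hpow_def by simp
lemma hpow_Suc[simp]: "hpow mul one a (Suc n) = mul a (hpow mul one a n)" unfolding hpow_def by simp
lemma hpow_inv: "mul a b = one \<Longrightarrow> mul (hpow mul one a n) (hpow mul one b n) = one"
proof (induction n)
  case 0 then show ?case by simp
next
  case (Suc n)
  have "mul (mul a (hpow mul one a n)) (mul b (hpow mul one b n)) = mul (mul a b) (mul (hpow mul one a n) (hpow mul one b n))"
    by (simp add: mul_ac)
  then show ?case using Suc by simp
qed

lemma mul_neg_r: "mul c (hneg x) = hneg (mul c x)" using neg_mul by simp
lemma mul_neg_l: "mul (hneg x) c = hneg (mul x c)" using neg_mul_l by simp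

lemma hsum_upt_Suc: "hsum add zero (map g [0..<Suc (Suc k)]) = sadd (hsum add zero (map g [0..<Suc k])) {g (Suc k)}"
proof -
  have "[0..<Suc (Suc k)] = [0..<Suc k] @ [Suc k]" by simp
  then show ?thesis by (simp only: map_append hsum_append) simp
qed

lemma chain: "z \<in> hsum add zero (map g [0..<Suc k]) \<Longrightarrow>
   \<exists>s. s k = z \<and> s 0 = g 0 \<and> (\<forall>j. 0 < j \<and> j \<le> k \<longrightarrow> s j \<in> add (s (j - 1)) (g j))"
proof (induction k arbitrary: z)
  case 0 then show ?case by (intro exI[of _ "\<lambda>_. z"]) simp
next
  case (Suc k)
  then obtain w where w: "w \<in> hsum add zero (map g [0..<Suc k])" "z \<in> add w (g (Suc k))"
    unfolding hsum_upt_Suc sadd_def by blast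
  obtain s where s: "s k = w" "s 0 = g 0" "\<forall>j. 0 < j \<and> j \<le> k \<longrightarrow> s j \<in> add (s (j - 1)) (g j)"
    using Suc.IH[OF w(1)] by blast
  show ?case
  proof (intro exI[of _ "s(Suc k := z)"] conjI allI impI)
    fix j assume j: "0 < j \<and> j \<le> Suc k"
    show "(s(Suc k := z)) j \<in> add ((s(Suc k := z)) (j - 1)) (g j)"
    proof (cases "j = Suc k")
      case True then show ?thesis using w s by simp
    next
      case False then show ?thesis using j s by auto
    qed
  qed (use s in auto)
qed

definition lin where "lin a = (\<lambda>i. if i = 0 then hneg a else if i = 1 then one else zero)"

lemma lin_deg: "has_degree zero (lin a) 1" unfolding has_degree_def lin_def by simp
lemma lin_poly: "is_poly zero (lin a)"
proof -
  have "{i. lin a i \<noteq> zero} \<subseteq> {0, 1}" unfolding lin_def by auto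
  then show ?thesis unfolding is_poly_def using finite_subset by blast
qed
lemma coef_lin_0: "coef (lin a) q 0 = {mul (hneg a) (q 0)}" by (simp add: coef_lin0 lin_def)
lemma coef_lin_S: "coef (lin a) q (Suc i) = add (mul (hneg a) (q (Suc i))) (q i)"
  by (subst coef_linS) (auto simp: lin_def)

lemma root_factor:
  assumes p: "is_poly zero p" "has_degree zero p n" and r: "is_root mul add zero one p a"
  shows "\<exists>q. is_poly zero q \<and> p \<in> hpmult mul add zero (lin a) q"
proof -
  obtain n' where n': "has_degree zero p n'" "zero \<in> hsum add zero (map (\<lambda>i. mul (p i) (hpow mul one a i)) [0..<Suc n'])"
    using r unfolding is_root_def by blast
  have "n' = n" using n' p degree_unique by blast
  define g where "g = (\<lambda>i. mul (p i) (hpow mul one a i))"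
  have root: "zero \<in> hsum add zero (map g [0..<Suc n])" using n' \<open>n' = n\<close> g_def by simp
  have pn: "\<And>i. i > n \<Longrightarrow> p i = zero" using p(2) unfolding has_degree_def by simp
  show ?thesis
  proof (cases "a = zero")
    case True
    have "hsum add zero (map g [0..<Suc n]) = hsum add zero (take 1 (map g [0..<Suc n]))"
    proof (rule hsum_take, intro allI impI)
      fix j assume "1 \<le> j \<and> j < length (map g [0..<Suc n])"
      then obtain j' where "j = Suc j'" "j < Suc n" by (cases j) auto
      then show "map g [0..<Suc n] ! j = zero" using True by (simp add: g_def del: upt_Suc)
    qed
    also have "\<dots> = {p 0}" by (simp add: g_def upt_conv_Cons del: upt_Suc)
    finally have p0: "p 0 = zero" using root by simp
    define q where "q = (\<lambda>i. p (Suc i))"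
    have "{i. q i \<noteq> zero} \<subseteq> {..n}" using pn unfolding q_def by (auto, metis Suc_leD not_le)
    then have qp: "is_poly zero q" unfolding is_poly_def using finite_subset by blast
    have "p i \<in> coef (lin a) q i" for i
    proof (cases i)
      case 0 then show ?thesis using True p0 by (simp add: coef_lin_0)
    next
      case (Suc j) then show ?thesis using True by (simp add: coef_lin_S q_def)
    qed
    then show ?thesis using qp p(1) by (auto simp: hpmult_iff)
  next
    case False
    define b where "b = hinv a"
    have ab: "mul a b = one" "b \<noteq> zero" using hinv[OF False] b_def by auto
    obtain s where s: "s n = zero" "s 0 = g 0" "\<forall>j. 0 < j \<and> j \<le> n \<longrightarrow> s j \<in> add (s (j - 1)) (g j)"
      using chain[OF root] by blast
    define q where "q = (\<lambda>i. if i \<le> n then hneg (mul (s i) (hpow mul one b (Suc i))) else zero)"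
    have "{i. q i \<noteq> zero} \<subseteq> {..n}" unfolding q_def by auto
    then have qp: "is_poly zero q" unfolding is_poly_def using finite_subset by blast
    have "p i \<in> coef (lin a) q i" for i
    proof (cases i)
      case 0
      have "mul (hneg a) (q 0) = mul (s 0) (mul a b)"
        by (simp add: q_def mul_neg_l mul_neg_r mul_ac)
      also have "\<dots> = p 0" using ab s(2) by (simp add: g_def)
      finally show ?thesis using 0 by (simp add: coef_lin_0)
    next
      case (Suc j)
      show ?thesis
      proof (cases "Suc j \<le> n")
        case True
        define B where "B = hpow mul one b (Suc j)"
        define A where "A = hpow mul one a (Suc j)"
        have AB: "mul A B = one" using hpow_inv[OF ab(1)] A_def B_def by blast
        have e1: "mul (hneg a) (q (Suc j)) = mul B (s (Suc j))"
        proof -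
          have "mul (hneg a) (q (Suc j)) = mul (mul a b) (mul B (s (Suc j)))"
            using True by (simp add: q_def B_def mul_neg_l mul_neg_r mul_ac)
          then show ?thesis using ab by simp
        qed
        have e2: "q j = mul B (hneg (s j))" using True by (simp add: q_def B_def mul_neg_r mul_neg_l del: hpow_Suc) (simp add: mul_ac)
        have "s (Suc j) \<in> add (s j) (g (Suc j))" using s(3) True by (metis diff_Suc_1 zero_less_Suc)
        then have "g (Suc j) \<in> add (s (Suc j)) (hneg (s j))" using add_comm revers' by metis
        then have "mul B (g (Suc j)) \<in> add (mul B (s (Suc j))) (mul B (hneg (s j)))"
          using distrib by simp
        moreover have "mul B (g (Suc j)) = p (Suc j)"
        proof -
          have "mul B (g (Suc j)) = mul (p (Suc j)) (mul A B)" by (simp add: g_def A_def mul_ac)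
          then show ?thesis using AB by simp
        qed
        ultimately show ?thesis using Suc e1 e2 by (simp add: coef_lin_S)
      next
        case False
        have "q (Suc j) = zero" using False by (simp add: q_def)
        moreover have "q j = zero" using False by (cases "j = n") (simp_all add: q_def s(1))
        moreover have "p (Suc j) = zero" using False pn by simp
        ultimately show ?thesis using Suc by (simp add: coef_lin_S)
      qed
    qed
    then show ?thesis using qp p(1) by (auto simp: hpmult_iff)
  qed
qed

end


context HF begin

lemma factor_root:
  assumes c: "has_degree zero c 1" and q: "is_poly zero q" and pm: "p \<in> hpmult mul add zero c q"
    and pn: "has_degree zero p n"
  shows "is_root mul add zero one p (hneg (mul (c 0) (hinv (c 1))))"
proof -
  define a where "a = hneg (mul (c 0) (hinv (c 1)))"
  have c1: "c 1 \<noteq> zero" and c2: "\<forall>k\<ge>2. c k = zero" using c unfolding has_degree_def by auto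
  have b1: "mul (c 1) (hinv (c 1)) = one" using hinv[OF c1] by simp
  have ca: "c 0 = hneg (mul a (c 1))"
  proof -
    have "mul a (c 1) = hneg (mul (c 0) (mul (c 1) (hinv (c 1))))"
      unfolding a_def by (simp add: mul_neg_l mul_neg_r) (simp add: mul_ac)
    then show ?thesis using b1 by simp
  qed
  have qn: "q n = zero"
  proof (rule ccontr)
    assume "q n \<noteq> zero"
    then obtain m where m: "has_degree zero q m" "n \<le> m" using degree_ex q by blast
    have "has_degree zero p (1 + m)" using degree_mult[OF c m(1) pm] .
    then have "1 + m = n" using pn degree_unique by blast
    then show False using m(2) by simp
  qed
  define r where "r = (\<lambda>i. mul (c 1) (mul (hpow mul one a (Suc i)) (q i)))"
  define t where "t = (\<lambda>i. mul (p i) (hpow mul one a i))"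
  have co: "\<And>i. p i \<in> coef c q i" using pm by (simp add: hpmult_iff)
  have claim: "hneg (r k) \<in> hsum add zero (map t [0..<Suc k])" for k
  proof (induction k)
    case 0
    have "p 0 = mul (c 0) (q 0)" using co[of 0] by (simp add: coef_lin0)
    then have "t 0 = hneg (r 0)" unfolding t_def r_def ca
      by (simp add: mul_neg_l mul_neg_r) (simp add: mul_ac)
    then show ?case by simp
  next
    case (Suc k)
    define A where "A = hpow mul one a (Suc k)"
    have "p (Suc k) \<in> add (mul (c 0) (q (Suc k))) (mul (c 1) (q k))"
      using co[of "Suc k"] coef_linS[OF c2] by simp
    then have "mul A (p (Suc k)) \<in> add (mul A (mul (c 0) (q (Suc k)))) (mul A (mul (c 1) (q k)))"
      using distrib by simp
    moreover have "mul A (p (Suc k)) = t (Suc k)" unfolding t_def A_def by (simp add: mul_ac del: hpow_Suc)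
    moreover have "mul A (mul (c 0) (q (Suc k))) = hneg (r (Suc k))"
      unfolding A_def r_def ca by (simp add: mul_neg_l mul_neg_r del: hpow_Suc) (simp add: mul_ac)
    moreover have "mul A (mul (c 1) (q k)) = r k" unfolding A_def r_def by (simp add: mul_ac del: hpow_Suc)
    ultimately have "t (Suc k) \<in> add (hneg (r (Suc k))) (r k)" by simp
    then have "hneg (r (Suc k)) \<in> add (hneg (r k)) (t (Suc k))" using revers' add_comm by metis
    then show ?case using Suc unfolding hsum_upt_Suc sadd_def by blast
  qed
  have "r n = zero" unfolding r_def qn by simp
  then have "zero \<in> hsum add zero (map t [0..<Suc n])" using claim[of n] by simp
  then show ?thesis unfolding is_root_def a_def[symmetric] t_def using pn by blast
qed

lemma main:
  assumes "is_poly zero p" "has_degree zero p 2 \<or> has_degree zero p 3"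
  shows "hirreducible mul add zero p \<longleftrightarrow> \<not> (\<exists>a. is_root mul add zero one p a)"
proof -
  obtain n where n: "has_degree zero p n" "n = 2 \<or> n = 3" using assms(2) by blast
  show ?thesis
  proof
    assume irr: "hirreducible mul add zero p"
    show "\<not> (\<exists>a. is_root mul add zero one p a)"
    proof
      assume "\<exists>a. is_root mul add zero one p a"
      then obtain a where a: "is_root mul add zero one p a" by blast
      obtain q where q: "is_poly zero q" "p \<in> hpmult mul add zero (lin a) q"
        using root_factor[OF assms(1) n(1) a] by blast
      obtain m1 m2 where m: "has_degree zero (lin a) m1" "has_degree zero q m2" "m1 + m2 = n"
        using nonzero_degree[OF lin_poly q(1) q(2) n(1)] by blast
      have "m1 = 1" using m(1) lin_deg degree_unique by blast
      have "assoc_poly mul add zero p (lin a) \<or> assoc_poly mul add zero p q"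
        using irr lin_poly q unfolding hirreducible_def by blast
      then show False
      proof
        assume "assoc_poly mul add zero p (lin a)"
        then have "has_degree zero p 1" using assoc_degree lin_deg by blast
        then have "n = 1" using n(1) degree_unique by blast
        then show False using n(2) by simp
      next
        assume "assoc_poly mul add zero p q"
        then have "has_degree zero p m2" using assoc_degree m(2) by blast
        then have "n = m2" using n(1) degree_unique by blast
        then show False using m(3) \<open>m1 = 1\<close> by simp
      qed
    qed
  next
    assume nr: "\<not> (\<exists>a. is_root mul add zero one p a)"
    have deg: "\<exists>k\<ge>1. has_degree zero p k" using n by (intro exI[of _ n]) auto
    have "assoc_poly mul add zero p q1 \<or> assoc_poly mul add zero p q2"
      if q: "is_poly zero q1" "is_poly zero q2" "p \<in> hpmult mul add zero q1 q2" for q1 q2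
    proof (rule ccontr)
      assume na: "\<not> (assoc_poly mul add zero p q1 \<or> assoc_poly mul add zero p q2)"
      obtain m1 m2 where m: "has_degree zero q1 m1" "has_degree zero q2 m2" "m1 + m2 = n"
        using nonzero_degree[OF q n(1)] by blast
      have const: "has_degree zero r 0 \<Longrightarrow> \<exists>cc. r = const_poly zero cc \<and> cc \<noteq> zero" for r
        unfolding has_degree_def const_poly_def by (intro exI[of _ "r 0"]) auto
      show False
      proof (cases "m1 = 0")
        case True
        then obtain cc where cc: "q1 = const_poly zero cc" "cc \<noteq> zero" using const m(1) by blast
        have "p \<in> hpmult mul add zero (const_poly zero cc) q2" using q(3) cc(1) by simp
        then have "assoc_poly mul add zero p q2" unfolding assoc_poly_def using cc(2) by blast
        then show False using na by blast
      next
        case False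
        show False
        proof (cases "m2 = 0")
          case True
          then obtain cc where cc: "q2 = const_poly zero cc" "cc \<noteq> zero" using const m(2) by blast
          have "p \<in> hpmult mul add zero (const_poly zero cc) q1" using hpmult_comm[OF q(3)] cc(1) by simp
          then have "assoc_poly mul add zero p q1" unfolding assoc_poly_def using cc(2) by blast
          then show False using na by blast
        next
          case False2: False
          have "m1 = 1 \<or> m2 = 1" using False False2 m(3) n(2) by auto
          then show False
          proof
            assume "m1 = 1"
            then show False using factor_root[OF _ q(2) q(3) n(1)] m(1) nr by blast
          next
            assume "m2 = 1"
            then show False using factor_root[OF _ q(1) hpmult_comm[OF q(3)] n(1)] m(2) nr by blast
          qed
        qed
      qed
    qed
    then show "hirreducible mul add zero p" unfolding hirreducible_def using deg by blast
  qed
qed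

end

theorem mainTheorem4:
  fixes mul :: "'a \<Rightarrow> 'a \<Rightarrow> 'a" and add :: "'a \<Rightarrow> 'a \<Rightarrow> 'a set"
    and zero one :: 'a and p :: "nat \<Rightarrow> 'a"
  assumes "hyperfield mul add zero one"
    and "is_poly zero p"
    and "has_degree zero p 2 \<or> has_degree zero p 3"
  shows "hirreducible mul add zero p \<longleftrightarrow> \<not> (\<exists>a. is_root mul add zero one p a)"
proof -
  interpret HF mul add zero one by (rule HF.intro) (rule assms(1))
  show ?thesis by (rule main[OF assms(2,3)])
qed


end
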